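(* Let $n\ge1$. (i) Suppose $\mathcal{C}\subseteq\mathbb{F}_2^{n+1}$ is a union $\mathcal{C}=\bigcup_{i=0}^{\lfloor n/2\rfloor}\mathcal{C}_i$, where for each $i$, $\mathcal{C}_i$ is a covering design $\mathcal{C}(n+1,\,n+1-2i,\,n-2i)$ (a set of vectors of weight $n+1-2i$ such that every vector of weight $n-2i$ is covered by one of them). Then deleting any one fixed coordinate from all vectors of $\mathcal{C}$ yields a banded asymmetric covering $\mathcal{D}(n,1)$. (ii) Conversely, let $\mathcal{D}\subseteq\mathbb{F}_2^n$ be a banded asymmetric covering $\mathcal{D}(n,1)$. Append to each vector of $\mathcal{D}$ a final bit $0$ or $1$ chosen so that the resulting vector of length $n+1$ has even co-weight. Then, for each $0\le i\le\lfloor n/2\rfloor$, the resulting vectors of weight $n+1-2i$ form a covering design $\mathcal{C}(n+1,n+1-2i,n-2i)$.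
   Context: Subsets are identified with indicator vectors; weight is Hamming weight and the co-weight of $u\in\mathbb{F}_2^n$ is $n-\mathrm{wt}(u)$. A vector $u$ covers $v$ if the support of $v$ is contained in that of $u$. An asymmetric covering $\mathcal{D}(n,1)$ is a set $\mathcal{D}\subseteq\mathbb{F}_2^n$ such that every $v\in\mathbb{F}_2^n$ either lies in $\mathcal{D}$ or is covered by some $u\in\mathcal{D}$ with $\mathrm{wt}(u)=\mathrm{wt}(v)+1$. It is banded if every $v\in\mathbb{F}_2^n$ of odd co-weight is covered by some $u\in\mathcal{D}$ with $\mathrm{wt}(u)=\mathrm{wt}(v)+1$. A covering design $\mathcal{C}(v,k,t)$ is a collection of $k$-subsets of a $v$-set such that every $t$-subset is contained in at least one of them. *)

theory Defs
  imports Main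
begin

text \<open>Vectors of F_2^n are identified with their supports, i.e. subsets of {0..<n}.
  Weight = card, co-weight = n - card, u covers v iff v \<subseteq> u.\<close>

definition asym_covering :: "nat \<Rightarrow> nat set set \<Rightarrow> bool" where
  "asym_covering n D \<longleftrightarrow> D \<subseteq> Pow {0..<n} \<and>
     (\<forall>v. v \<subseteq> {0..<n} \<longrightarrow> v \<in> D \<or> (\<exists>u\<in>D. v \<subseteq> u \<and> card u = card v + 1))"

definition banded :: "nat \<Rightarrow> nat set set \<Rightarrow> bool" where
  "banded n D \<longleftrightarrow>
     (\<forall>v. v \<subseteq> {0..<n} \<longrightarrow> odd (n - card v) \<longrightarrow> (\<exists>u\<in>D. v \<subseteq> u \<and> card u = card v + 1))"

definition covering_design :: "nat \<Rightarrow> nat \<Rightarrow> nat \<Rightarrow> nat set set \<Rightarrow> bool" where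
  "covering_design v k t C \<longleftrightarrow> (\<forall>B\<in>C. B \<subseteq> {0..<v} \<and> card B = k) \<and>
     (\<forall>T. T \<subseteq> {0..<v} \<and> card T = t \<longrightarrow> (\<exists>B\<in>C. T \<subseteq> B))"

definition delete_coord :: "nat \<Rightarrow> nat set \<Rightarrow> nat set" where
  "delete_coord j u = (\<lambda>x. if x < j then x else x - 1) ` (u - {j})"

definition extend_even :: "nat \<Rightarrow> nat set \<Rightarrow> nat set" where
  "extend_even n u = (if even (n + 1 - card u) then u else insert n u)"

end

theory Submission
  imports Defs
begin

definition lift :: "nat \<Rightarrow> nat set \<Rightarrow> nat set" where
  "lift j v = (\<lambda>x. if x < j then x else Suc x) ` v"

lemma lift_sub: "v \<subseteq> {0..<n} \<Longrightarrow> j < n + 1 \<Longrightarrow> lift j v \<subseteq> {0..<n+1}"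
  unfolding lift_def by auto

lemma j_notin_lift: "j \<notin> lift j v"
  unfolding lift_def by auto

lemma card_lift: "card (lift j v) = card v"
  unfolding lift_def by (rule card_image) (auto simp: inj_on_def split: if_splits)

lemma del_lift: "delete_coord j (lift j v) = v"
proof -
  have h1: "lift j v - {j} = lift j v" using j_notin_lift[of j v] by blast
  have h2: "(\<lambda>x::nat. if x < j then x else x - 1) \<circ> (\<lambda>x. if x < j then x else Suc x) = id"
    by (auto simp: fun_eq_iff)
  show ?thesis unfolding delete_coord_def h1 unfolding lift_def image_comp h2 by simp
qed

lemma del_lift2: "delete_coord j (insert j (lift j v)) = v"
proof -
  have "insert j (lift j v) - {j} = lift j v - {j}" by auto
  then show ?thesis using del_lift[of j v] unfolding delete_coord_def by simp
qed

lemma del_mono: "A \<subseteq> B \<Longrightarrow> delete_coord j A \<subseteq> delete_coord j B"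
  unfolding delete_coord_def by auto

lemma card_del: "card (delete_coord j B) = card (B - {j})"
  unfolding delete_coord_def
  by (rule card_image) (auto simp: inj_on_def split: if_splits)

lemma del_sub: "B \<subseteq> {0..<n+1} \<Longrightarrow> j < n + 1 \<Longrightarrow> delete_coord j B \<subseteq> {0..<n}"
  unfolding delete_coord_def by (auto split: if_splits)

lemma part1_odd:
  assumes cov: "\<forall>i \<le> n div 2. covering_design (n + 1) (n + 1 - 2 * i) (n - 2 * i) (Cs i)"
    and j: "j < n + 1" and v: "v \<subseteq> {0..<n}" and odd: "odd (n - card v)"
  shows "\<exists>u\<in>delete_coord j ` (\<Union>i \<in> {..n div 2}. Cs i). v \<subseteq> u \<and> card u = card v + 1"
proof -
  define w where "w = card v"
  have fv: "finite v" using v finite_subset by blast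
  have wn: "w < n" using odd w_def by (metis diff_is_0_eq even_zero not_less)
  define i where "i = (n - w - 1) div 2"
  obtain k where k: "n - w = 2 * k + 1" using odd unfolding w_def[symmetric] by (rule oddE)
  have ik: "i = k" unfolding i_def using k by simp
  have ni: "n - 2 * i = w + 1" "i \<le> n div 2" using k wn ik by presburger+
  define v2 where "v2 = insert j (lift j v)"
  have v2s: "v2 \<subseteq> {0..<n+1}" using lift_sub[OF v j] j v2_def by auto
  have cv2: "card v2 = n - 2 * i" using ni card_lift[of j v] j_notin_lift[of j v] fv
    unfolding v2_def w_def
    by (simp add: card_insert_if lift_def)
  obtain B where B: "B \<in> Cs i" "v2 \<subseteq> B" using cov ni v2s cv2 unfolding covering_design_def by blast
  have cB: "card B = w + 2" "B \<subseteq> {0..<n+1}" using cov ni B unfolding covering_design_def by auto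
  have fB: "finite B" using cB finite_subset by blast
  have jB: "j \<in> B" using B v2_def by auto
  have "card (delete_coord j B) = w + 1" using card_del[of j B] cB jB fB by simp
  moreover have "v \<subseteq> delete_coord j B" using del_mono[OF B(2), of j] del_lift2[of j v] v2_def by simp
  moreover have "delete_coord j B \<in> delete_coord j ` (\<Union>i \<in> {..n div 2}. Cs i)" using B ni by blast
  ultimately show ?thesis using w_def by blast
qed

lemma part1_even:
  assumes cov: "\<forall>i \<le> n div 2. covering_design (n + 1) (n + 1 - 2 * i) (n - 2 * i) (Cs i)"
    and j: "j < n + 1" and v: "v \<subseteq> {0..<n}" and ev: "even (n - card v)"
  shows "v \<in> delete_coord j ` (\<Union>i \<in> {..n div 2}. Cs i) \<or>
    (\<exists>u\<in>delete_coord j ` (\<Union>i \<in> {..n div 2}. Cs i). v \<subseteq> u \<and> card u = card v + 1)"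
proof -
  define w where "w = card v"
  have fv: "finite v" using v finite_subset by blast
  have wn: "w \<le> n" using v w_def by (metis card_atLeastLessThan card_mono diff_zero finite_atLeastLessThan)
  define i where "i = (n - w) div 2"
  obtain k where k: "n - w = 2 * k" using ev unfolding w_def[symmetric] by (rule evenE)
  have ik: "i = k" unfolding i_def using k by simp
  have ni: "n - 2 * i = w" "i \<le> n div 2" using k wn ik by presburger+
  define v2 where "v2 = lift j v"
  have v2s: "v2 \<subseteq> {0..<n+1}" using lift_sub[OF v j] v2_def by auto
  have cv2: "card v2 = n - 2 * i" using ni card_lift[of j v] unfolding v2_def w_def by simp
  obtain B where B: "B \<in> Cs i" "v2 \<subseteq> B" using cov ni v2s cv2 unfolding covering_design_def by blast
  have cB: "card B = w + 1" "B \<subseteq> {0..<n+1}" using cov ni B unfolding covering_design_def by auto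
  have fB: "finite B" using cB finite_subset by blast
  have Bin: "delete_coord j B \<in> delete_coord j ` (\<Union>i \<in> {..n div 2}. Cs i)" using B ni by blast
  show ?thesis
  proof (cases "j \<in> B")
    case True
    have "insert j v2 \<subseteq> B" using True B by auto
    moreover have "card (insert j v2) = card B"
      using cB cv2 ni j_notin_lift[of j v] fv unfolding v2_def by (simp add: card_insert_if lift_def)
    ultimately have "B = insert j v2" using fB by (metis card_subset_eq)
    then have "delete_coord j B = v" using del_lift2 v2_def by simp
    then show ?thesis using Bin by simp
  next
    case False
    have "card (delete_coord j B) = w + 1" using card_del[of j B] cB False by simp
    moreover have "v \<subseteq> delete_coord j B" using del_mono[OF B(2), of j] del_lift[of j v] v2_def by simp
    ultimately show ?thesis using Bin w_def by blast
  qed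
qed

lemma part2:
  assumes as: "asym_covering n D" and ba: "banded n D" and i: "i \<le> n div 2"
  shows "covering_design (n + 1) (n + 1 - 2 * i) (n - 2 * i)
                 {w \<in> extend_even n ` D. card w = n + 1 - 2 * i}"
  unfolding covering_design_def
proof (rule conjI; intro ballI allI impI)
  fix B assume "B \<in> {w \<in> extend_even n ` D. card w = n + 1 - 2 * i}"
  then obtain u where u: "u \<in> D" "B = extend_even n u" "card B = n + 1 - 2 * i" by blast
  have "u \<subseteq> {0..<n}" using as u unfolding asym_covering_def by auto
  then have "B \<subseteq> {0..<n + 1}" using u unfolding extend_even_def by auto
  then show "B \<subseteq> {0..<n + 1} \<and> card B = n + 1 - 2 * i" using u by simp
next
  fix T assume T: "T \<subseteq> {0..<n + 1} \<and> card T = n - 2 * i"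
  have fT: "finite T" using T finite_subset by blast
  show "\<exists>B\<in>{w \<in> extend_even n ` D. card w = n + 1 - 2 * i}. T \<subseteq> B"
  proof (cases "n \<in> T")
    case False
    then have Ts: "T \<subseteq> {0..<n}" using T by (auto simp: less_Suc_eq subset_iff)
    have ev: "even (n - card T)" using T i by auto
    have DP: "D \<subseteq> Pow {0..<n}" using as unfolding asym_covering_def by auto
    from as Ts have "T \<in> D \<or> (\<exists>u\<in>D. T \<subseteq> u \<and> card u = card T + 1)"
      unfolding asym_covering_def by auto
    then show ?thesis
    proof
      assume TD: "T \<in> D"
      have "odd (n + 1 - card T)" using T i by auto
      then have e: "extend_even n T = insert n T" unfolding extend_even_def by simp
      have "card (insert n T) = n + 1 - 2 * i" using False fT T i by simp
      then show ?thesis using e TD by (metis (mono_tags, lifting) image_eqI mem_Collect_eq subset_insertI)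
    next
      assume "\<exists>u\<in>D. T \<subseteq> u \<and> card u = card T + 1"
      then obtain u where u: "u \<in> D" "T \<subseteq> u" "card u = card T + 1" by blast
      have "even (n + 1 - card u)" using T i u by auto
      then have e: "extend_even n u = u" unfolding extend_even_def by simp
      have "card u = n + 1 - 2 * i" using u T i by simp
      then show ?thesis using e u by (metis (mono_tags, lifting) image_eqI mem_Collect_eq)
    qed
  next
    case True
    define T' where "T' = T - {n}"
    have cT: "card T' + 1 = card T" using True fT unfolding T'_def
      by (metis One_nat_def Suc_eq_plus1 card.remove)
    have Ts: "T' \<subseteq> {0..<n}" using T unfolding T'_def by auto
    have c1: "card T \<ge> 1" using True fT by (metis One_nat_def Suc_leI card_gt_0_iff empty_iff)
    have i2: "2 * i \<le> n" using i by linarith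
    have "n - card T' = 2 * i + 1" using cT c1 i2 T by linarith
    then have od: "odd (n - card T')" by simp
    then obtain u where u: "u \<in> D" "T' \<subseteq> u" "card u = card T' + 1"
      using ba Ts unfolding banded_def by blast
    have "D \<subseteq> Pow {0..<n}" using as unfolding asym_covering_def by (rule conjunct1)
    then have us: "u \<subseteq> {0..<n}" using u(1) by blast
    then have nu: "n \<notin> u" by auto
    note us
    then have fu: "finite u" using finite_subset by blast
    have cTT: "card T = n - 2 * i" using T by blast
    have "n + 1 - card u = 2 * i + 1" using cT c1 i2 cTT u(3) by linarith
    then have "odd (n + 1 - card u)" by simp
    then have e: "extend_even n u = insert n u" unfolding extend_even_def by simp
    have "card (insert n u) = Suc (card u)" using nu fu by simp
    then have "card (insert n u) = n + 1 - 2 * i" using u(3) cT cTT c1 i2 by linarith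
    moreover have "T \<subseteq> insert n u" using u T'_def by auto
    ultimately show ?thesis using e u by (metis (mono_tags, lifting) image_eqI mem_Collect_eq)
  qed
qed

theorem theorem3:
  fixes n :: nat
  assumes "n \<ge> 1"
  shows "(\<forall>(Cs :: nat \<Rightarrow> nat set set) j.
            (\<forall>i \<le> n div 2. covering_design (n + 1) (n + 1 - 2 * i) (n - 2 * i) (Cs i)) \<and> j < n + 1
            \<longrightarrow> (let D = delete_coord j ` (\<Union>i \<in> {..n div 2}. Cs i)
                 in asym_covering n D \<and> banded n D))
       \<and> (\<forall>D. asym_covering n D \<and> banded n D \<longrightarrow>
            (\<forall>i \<le> n div 2. covering_design (n + 1) (n + 1 - 2 * i) (n - 2 * i)
                 {w \<in> extend_even n ` D. card w = n + 1 - 2 * i}))"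
proof (intro conjI allI impI)
  fix Cs :: "nat \<Rightarrow> nat set set" and j
  assume H: "(\<forall>i \<le> n div 2. covering_design (n + 1) (n + 1 - 2 * i) (n - 2 * i) (Cs i)) \<and> j < n + 1"
  define D where "D = delete_coord j ` (\<Union>i \<in> {..n div 2}. Cs i)"
  have sub: "D \<subseteq> Pow {0..<n}"
  proof
    fix x assume "x \<in> D"
    then obtain i B where "i \<le> n div 2" "B \<in> Cs i" "x = delete_coord j B" unfolding D_def by auto
    note xb = this
    have "covering_design (n + 1) (n + 1 - 2 * i) (n - 2 * i) (Cs i)" using H xb(1) by blast
    then have "B \<subseteq> {0..<n+1}" using xb(2) unfolding covering_design_def by blast
    then show "x \<in> Pow {0..<n}" using H del_sub[of B n j] xb(3) by blast
  qed
  have cov: "\<forall>i \<le> n div 2. covering_design (n + 1) (n + 1 - 2 * i) (n - 2 * i) (Cs i)"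
    and j: "j < n + 1" using H by (rule conjunct1, rule conjunct2)
  have P1: "\<exists>u\<in>D. v \<subseteq> u \<and> card u = card v + 1" if "v \<subseteq> {0..<n}" "odd (n - card v)" for v
    using part1_odd[OF cov j that] unfolding D_def .
  have P2: "v \<in> D \<or> (\<exists>u\<in>D. v \<subseteq> u \<and> card u = card v + 1)" if "v \<subseteq> {0..<n}" "even (n - card v)" for v
    using part1_even[OF cov j that] unfolding D_def .
  have "asym_covering n D" unfolding asym_covering_def
  proof (intro conjI allI impI)
    fix v assume v: "v \<subseteq> {0..<n}"
    show "v \<in> D \<or> (\<exists>u\<in>D. v \<subseteq> u \<and> card u = card v + 1)"
    proof (cases "even (n - card v)")
      case True then show ?thesis using P2[OF v] by simp
    next
      case False then show ?thesis using P1[OF v] by simp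
    qed
  qed (rule sub)
  moreover have "banded n D" unfolding banded_def using P1 by simp
  ultimately have "asym_covering n D \<and> banded n D" by (rule conjI)
  then show "let D = delete_coord j ` (\<Union>i \<in> {..n div 2}. Cs i) in asym_covering n D \<and> banded n D"
    unfolding Let_def D_def .
next
  fix D i assume ab: "asym_covering n D \<and> banded n D" and i: "i \<le> n div 2"
  show "covering_design (n + 1) (n + 1 - 2 * i) (n - 2 * i) {w \<in> extend_even n ` D. card w = n + 1 - 2 * i}"
    by (rule part2[OF conjunct1[OF ab] conjunct2[OF ab] i])
qed

end
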